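(* Let $w\in\Sigma^*$ and let $u$ be a scattered factor of $w$ with $|u|\le\iota(w)$. Then $|E(w,u)|\ge\binom{\iota(w)}{|u|}$.
   Context: The alphabet $\Sigma$ is assumed to be exactly the set of letters occurring in $w$. A word $u$ is a scattered factor of $w$ if $w=v_1u[1]v_2\cdots v_{|u|}u[|u|]v_{|u|+1}$ for some words $v_i$. An embedding of $u$ in $w$ is a map $e:\{1,\dots,|u|\}\to\{1,\dots,|w|\}$ with $e(1)<\dots<e(|u|)$ and $u[i]=w[e(i)]$ for all $i$; $E(w,u)$ is the set of all embeddings of $u$ in $w$. The universality index $\iota(w)$ is the largest $k\in\mathbb{N}_0$ such that every word in $\Sigma^k$ is a scattered factor of $w$. *)

theory Defs
  imports Main "HOL-Library.Sublist" "HOL-Library.FuncSet"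
begin

text \<open>Words are lists; positions are 1-based as in the paper. The alphabet of w is set w.\<close>

definition scattered_factor :: "'a list \<Rightarrow> 'a list \<Rightarrow> bool" where
  "scattered_factor u w \<longleftrightarrow> subseq u w"

definition embeddings :: "'a list \<Rightarrow> 'a list \<Rightarrow> (nat \<Rightarrow> nat) set" where
  "embeddings w u = {e \<in> {1..length u} \<rightarrow>\<^sub>E {1..length w}.
      (\<forall>i j. 1 \<le> i \<longrightarrow> i < j \<longrightarrow> j \<le> length u \<longrightarrow> e i < e j) \<and>
      (\<forall>i. 1 \<le> i \<longrightarrow> i \<le> length u \<longrightarrow> u ! (i - 1) = w ! (e i - 1))}"

definition iota :: "'a list \<Rightarrow> nat" where
  "iota w = (GREATEST k. \<forall>v. set v \<subseteq> set w \<longrightarrow> length v = k \<longrightarrow> scattered_factor v w)"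

end

theory Submission
  imports Defs
begin

definition univw :: "'a set \<Rightarrow> nat \<Rightarrow> 'a list \<Rightarrow> bool" where
  "univw A k w \<longleftrightarrow> (\<forall>v. set v \<subseteq> A \<longrightarrow> length v = k \<longrightarrow> subseq v w)"

definition PL :: "'a list \<Rightarrow> 'a list \<Rightarrow> nat list set" where
  "PL u w = {p. length p = length u \<and> sorted_wrt (<) p \<and>
     (\<forall>i<length p. p!i < length w \<and> w!(p!i) = u!i)}"

lemma subseq_skip:
  assumes "c \<notin> set xs" "subseq (c#v) (xs @ c # ys)"
  shows "subseq v ys"
  using assms
proof (induction xs)
  case Nil
  then show ?case by simp
next
  case (Cons x xs)
  then show ?case by (metis list.set_intros(1,2) append_Cons subseq_Cons2_neq)
qed

lemma subseq_set_sub: "subseq v w \<Longrightarrow> set v \<subseteq> set w"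
  using list_emb_set[of "(=)" v w] by blast

lemma arch_split:
  assumes "univw A (Suc k) w" "A \<noteq> {}"
  shows "\<exists>w1 w2. w = w1 @ w2 \<and> A \<subseteq> set w1 \<and> univw A k w2"
proof -
  have Aw: "A \<subseteq> set w"
  proof
    fix a assume "a \<in> A"
    then have "subseq (replicate (Suc k) a) w" using assms(1) unfolding univw_def
      by (metis length_replicate set_replicate_Suc singletonD subsetI)
    then show "a \<in> set w" using subseq_set_sub by fastforce
  qed
  define n where "n = (LEAST n. A \<subseteq> set (take n w))"
  have n1: "A \<subseteq> set (take n w)" unfolding n_def
    by (rule LeastI[of _ "length w"]) (use Aw in simp)
  have n2: "n \<le> length w" unfolding n_def
    by (rule Least_le) (use Aw in simp)
  have n0: "n \<noteq> 0" using n1 assms(2) by auto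
  have n3: "\<not> A \<subseteq> set (take (n - 1) w)"
    using not_less_Least[of "n - 1" "\<lambda>n. A \<subseteq> set (take n w)"] n0 unfolding n_def by auto
  define c where "c = w ! (n - 1)"
  have tk: "take n w = take (n - 1) w @ [c]"
    using n0 n2 unfolding c_def
    by (metis Suc_diff_1 Suc_le_lessD bot_nat_0.not_eq_extremum take_Suc_conv_app_nth)
  have wd: "w = take (n - 1) w @ c # drop n w"
    by (metis append.assoc append_Cons append_Nil append_take_drop_id tk)
  have cA: "c \<in> A" and cn: "c \<notin> set (take (n - 1) w)"
    using n1 n3 tk by auto
  have "univw A k (drop n w)"
    unfolding univw_def
  proof (intro allI impI)
    fix v :: "'a list" assume "set v \<subseteq> A" "length v = k"
    then have "subseq (c # v) w" using assms(1) cA unfolding univw_def by auto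
    then show "subseq v (drop n w)" using subseq_skip[OF cn] wd by metis
  qed
  then show ?thesis using n1 by (metis append_take_drop_id)
qed


lemma PL_finite: "finite (PL u w)"
proof -
  have "PL u w \<subseteq> {p. set p \<subseteq> {..<length w} \<and> length p = length u}"
    unfolding PL_def by (auto simp: in_set_conv_nth)
  moreover have "finite {p. set p \<subseteq> {..<length w} \<and> length p = length u}"
    by (rule finite_lists_length_eq) simp
  ultimately show ?thesis by (rule finite_subset)
qed

lemma PL_Nil: "PL [] w = {[]}"
  unfolding PL_def by auto

lemma PL_shift:
  assumes "p \<in> PL u w2"
  shows "map ((+) (length w1)) p \<in> PL u (w1 @ w2)"
  using assms unfolding PL_def by (auto simp: sorted_wrt_map nth_append)

lemma PL_cons:
  assumes "j < length w1" "w1 ! j = a" "p \<in> PL u w2"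
  shows "j # map ((+) (length w1)) p \<in> PL (a # u) (w1 @ w2)"
proof -
  have "map ((+) (length w1)) p \<in> PL u (w1 @ w2)" using PL_shift[OF assms(3)] .
  then show ?thesis using assms unfolding PL_def
    by (auto simp: nth_append nth_Cons' in_set_conv_nth)
qed

lemma main_count:
  assumes "univw A k w" "set u \<subseteq> A"
  shows "k choose length u \<le> card (PL u w)"
  using assms
proof (induction k arbitrary: w u)
  case 0
  then show ?case by (cases u) (auto simp: PL_Nil)
next
  case (Suc k)
  show ?case
  proof (cases u)
    case Nil
    then show ?thesis by (simp add: PL_Nil)
  next
    case (Cons a u')
    then have "A \<noteq> {}" using Suc.prems by auto
    then obtain w1 w2 where ww: "w = w1 @ w2" "A \<subseteq> set w1" "univw A k w2"
      using arch_split Suc.prems(1) by blast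
    have "a \<in> set w1" using ww Cons Suc.prems by auto
    then obtain j where j: "j < length w1" "w1 ! j = a" by (auto simp: in_set_conv_nth)
    define S1 where "S1 = map ((+) (length w1)) ` PL u w2"
    define S2 where "S2 = (\<lambda>p. j # map ((+) (length w1)) p) ` PL u' w2"
    have ih1: "k choose length u \<le> card (PL u w2)" using Suc.IH ww Suc.prems by blast
    have ih2: "k choose length u' \<le> card (PL u' w2)" using Suc.IH ww Suc.prems Cons by auto
    have inj1: "inj_on (map ((+) (length w1))) (PL u w2)"
      by (rule inj_onI) (simp add: inj_map_eq_map inj_def)
    have inj2: "inj_on (\<lambda>p. j # map ((+) (length w1)) p) (PL u' w2)"
      by (rule inj_onI) (simp add: inj_map_eq_map inj_def)
    have c1: "card S1 = card (PL u w2)" unfolding S1_def by (rule card_image[OF inj1])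
    have c2: "card S2 = card (PL u' w2)" unfolding S2_def by (rule card_image[OF inj2])
    have sub: "S1 \<union> S2 \<subseteq> PL u w"
      unfolding S1_def S2_def using PL_shift PL_cons[OF j] ww Cons by blast
    have disj: "S1 \<inter> S2 = {}"
    proof -
      { fix p assume "p \<in> S1" "p \<in> S2"
        then obtain q where "q \<in> PL u w2" "p = map ((+) (length w1)) q" unfolding S1_def by auto
        moreover have "length q = length u" using \<open>q \<in> PL u w2\<close> unfolding PL_def by auto
        ultimately have "p \<noteq> [] \<and> hd p \<ge> length w1" using Cons by (cases q) auto
        moreover from \<open>p \<in> S2\<close> have "hd p = j" unfolding S2_def by auto
        ultimately have False using j by auto }
      then show ?thesis by blast
    qed
    have fin: "finite S1" "finite S2" unfolding S1_def S2_def using PL_finite by auto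
    have "Suc k choose length u = (k choose length u') + (k choose length u)"
      using Cons by simp
    also have "\<dots> \<le> card S2 + card S1" using ih1 ih2 c1 c2 by simp
    also have "\<dots> = card (S1 \<union> S2)" using card_Un_disjoint[OF fin disj] by simp
    also have "\<dots> \<le> card (PL u w)" using card_mono[OF PL_finite sub] .
    finally show ?thesis .
  qed
qed


lemma emb_finite: "finite (embeddings w u)"
proof -
  have "embeddings w u \<subseteq> {1..length u} \<rightarrow>\<^sub>E {1..length w}"
    unfolding embeddings_def by auto
  moreover have "finite ({1..length u} \<rightarrow>\<^sub>E {1..length w})"
    by (rule finite_PiE) auto
  ultimately show ?thesis by (rule finite_subset)
qed

lemma PL_le_emb: "card (PL u w) \<le> card (embeddings w u)"
proof -
  define F where "F = (\<lambda>p::nat list. \<lambda>i. if i \<in> {1..length u} then Suc (p ! (i - 1)) else undefined)"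
  have inj: "inj_on F (PL u w)"
  proof (rule inj_onI)
    fix p q assume p: "p \<in> PL u w" and q: "q \<in> PL u w" and e: "F p = F q"
    have lp: "length p = length u" and lq: "length q = length u" using p q unfolding PL_def by auto
    show "p = q"
    proof (rule nth_equalityI)
      show "length p = length q" using lp lq by simp
      fix i assume "i < length p"
      then have "F p (Suc i) = F q (Suc i)" using e by simp
      then show "p ! i = q ! i" using \<open>i < length p\<close> lp unfolding F_def by auto
    qed
  qed
  have sub: "F ` PL u w \<subseteq> embeddings w u"
  proof
    fix e assume "e \<in> F ` PL u w"
    then obtain p where p: "p \<in> PL u w" and e: "e = F p" by auto
    have lp: "length p = length u" and sp: "sorted_wrt (<) p"
      and pp: "\<And>i. i < length p \<Longrightarrow> p!i < length w \<and> w!(p!i) = u!i"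
      using p unfolding PL_def by auto
    have "e \<in> {1..length u} \<rightarrow>\<^sub>E {1..length w}"
      using pp lp unfolding e F_def PiE_def extensional_def
      by (auto simp: Suc_le_eq)
    moreover have "\<forall>i j. 1 \<le> i \<longrightarrow> i < j \<longrightarrow> j \<le> length u \<longrightarrow> e i < e j"
    proof (intro allI impI)
      fix i j :: nat assume "1 \<le> i" "i < j" "j \<le> length u"
      then have "p ! (i - 1) < p ! (j - 1)" using sp lp
        by (simp add: sorted_wrt_iff_nth_less)
      then show "e i < e j" using \<open>1 \<le> i\<close> \<open>i < j\<close> \<open>j \<le> length u\<close> unfolding e F_def by auto
    qed
    moreover have "\<forall>i. 1 \<le> i \<longrightarrow> i \<le> length u \<longrightarrow> u ! (i - 1) = w ! (e i - 1)"
      using pp lp unfolding e F_def by auto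
    ultimately show "e \<in> embeddings w u" unfolding embeddings_def by blast
  qed
  have "card (PL u w) = card (F ` PL u w)" using card_image[OF inj] by simp
  also have "\<dots> \<le> card (embeddings w u)" using card_mono[OF emb_finite sub] .
  finally show ?thesis .
qed

lemma iota_univ:
  assumes "w \<noteq> []"
  shows "univw (set w) (iota w) w"
proof -
  let ?P = "\<lambda>k. \<forall>v. set v \<subseteq> set w \<longrightarrow> length v = k \<longrightarrow> scattered_factor v w"
  have "?P (Greatest ?P)"
  proof (rule GreatestI_nat[of _ 0 "length w"])
    show "?P 0" by (simp add: scattered_factor_def)
    show "\<And>y. ?P y \<Longrightarrow> y \<le> length w"
    proof -
      fix y assume "?P y"
      moreover have "set (replicate y (hd w)) \<subseteq> set w" using assms by auto
      ultimately have "subseq (replicate y (hd w)) w"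
        by (auto simp: scattered_factor_def)
      then show "y \<le> length w" using list_emb_length by fastforce
    qed
  qed
  then show ?thesis unfolding univw_def iota_def scattered_factor_def by simp
qed

theorem lemma22:
  fixes w u :: "'a list"
  assumes "scattered_factor u w"
    and "length u \<le> iota w"
  shows "card (embeddings w u) \<ge> iota w choose length u"
proof (cases "w = []")
  case True
  then have "u = []" using assms(1) unfolding scattered_factor_def by simp
  then have "iota w choose length u = card (PL u w)" by (simp add: PL_Nil)
  then show ?thesis using PL_le_emb by metis
next
  case False
  have "set u \<subseteq> set w" using assms(1) subseq_set_sub unfolding scattered_factor_def by blast
  then have "iota w choose length u \<le> card (PL u w)"
    using main_count iota_univ[OF False] by blast
  then show ?thesis using PL_le_emb order_trans by blast
qed

end
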